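(* There exists a time-invariant SMP system, with parameter set $\bar{\mathbb{S}}_\theta$ and random parameter vector $\bar v_t(\bar\theta)$, such that for every positive integer $d_\theta$ and every choice of random vertices $v_t^{(1)},\dots,v_t^{(d_\theta)}$ (i.i.d. with respect to $t$ and independent of the parameter), the random polytopic system with $v_t(\theta)=\sum_{k=1}^{d_\theta}[\theta]_kv_t^{(k)}$, $\theta\in\mathbb{S}_\theta:=\{\theta\in\mathbb{R}^{d_\theta}:[\theta]_k\ge0,\sum_k[\theta]_k=1\}$, does not satisfy both of the following: (A) for every $\bar\theta\in\bar{\mathbb{S}}_\theta$ there exists $\theta\in\mathbb{S}_\theta$ with $\mathrm{E}[\bar v_t(\bar\theta)\bar v_t(\bar\theta)^\top|\bar\theta]=\mathrm{E}[v_t(\theta)v_t(\theta)^\top|\theta]$; (B) for every $\theta\in\mathbb{S}_\theta$ there exists $\bar\theta\in\bar{\mathbb{S}}_\theta$ with $\mathrm{E}[\bar v_t(\bar\theta)\bar v_t(\bar\theta)^\top|\bar\theta]=\mathrm{E}[v_t(\theta)v_t(\theta)^\top|\theta]$.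
   Context: A system $x_{t+1}=A_t(\theta_t)x_t+B_t(\theta_t)u_t$ ($x_t\in\mathbb{R}^n$, $u_t\in\mathbb{R}^m$, uncertain $\theta_t$ in a parameter set, random $v_t(\theta_t):=\mathrm{vec}([A_t(\theta_t),B_t(\theta_t)])\in\mathbb{R}^{n(n+m)}$, $\mathrm{vec}$ stacking columns, with conditional density given the parameter, independent over $t$) is second moment polytopic (SMP) if there exist a positive integer $N$, symmetric $M^{(1)},\dots,M^{(N)}\in\mathbb{R}^{n(n+m)\times n(n+m)}$ and a map $\phi$ from the parameter set into $\mathbb{P}_N:=\{\varphi\in\mathbb{R}^N:\varphi_k\ge0,\sum\varphi_k=1\}$ with $\mathrm{E}[v_tv_t^\top|\theta_\bullet]=\sum_k[\phi(\theta_t)]_kM^{(k)}$ for all $t$ and all parameter sequences; it is time-invariant (TI) if $\theta_t=\theta$ is constant in $t$. $\mathrm{E}[\cdot|\theta]$ denotes conditional expectation given the (constant) parameter. *)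

theory Defs
  imports "HOL-Probability.Probability"
begin

text \<open>Vectors in R^p are represented as functions nat => real restricted to the
  index set {..<p}; p = n*(n+m) is the length of vec([A,B]).
  Random vectors are represented by their laws (probability measures on the
  product space).\<close>

definition prob_simplex :: "nat \<Rightarrow> (nat \<Rightarrow> real) set" where
  "prob_simplex N = {\<phi>. (\<forall>k<N. 0 \<le> \<phi> k) \<and> (\<Sum>k<N. \<phi> k) = 1 \<and> (\<forall>k\<ge>N. \<phi> k = 0)}"

definition vec_space :: "nat \<Rightarrow> (nat \<Rightarrow> real) measure" where
  "vec_space p = PiM {..<p} (\<lambda>_. lborel)"

definition smom :: "(nat \<Rightarrow> real) measure \<Rightarrow> nat \<Rightarrow> nat \<Rightarrow> real" where
  "smom Q i j = (\<integral>x. x i * x j \<partial>Q)"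

text \<open>A time-invariant SMP system with state dim n, input dim m, parameter set S,
  and (i.i.d. over t) law Q th of v_t(th) = vec([A_t(th), B_t(th)]) given the
  constant parameter th; the law has a density (w.r.t. Lebesgue measure on R^p)
  and finite second moments.\<close>
definition TI_SMP ::
  "nat \<Rightarrow> nat \<Rightarrow> (nat \<Rightarrow> real) set \<Rightarrow> ((nat \<Rightarrow> real) \<Rightarrow> (nat \<Rightarrow> real) measure) \<Rightarrow> bool" where
  "TI_SMP n m S Q \<longleftrightarrow>
     (let p = n * (n + m) in
       (\<forall>th\<in>S. prob_space (Q th) \<and>
          (\<exists>f. f \<in> borel_measurable (vec_space p) \<and> Q th = density (vec_space p) f) \<and>
          (\<forall>i<p. integrable (Q th) (\<lambda>x. (x i)\<^sup>2))) \<and>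
       (\<exists>N>0. \<exists>Ms :: nat \<Rightarrow> nat \<Rightarrow> nat \<Rightarrow> real. \<exists>\<phi> :: (nat \<Rightarrow> real) \<Rightarrow> nat \<Rightarrow> real.
          (\<forall>k<N. \<forall>i<p. \<forall>j<p. Ms k i j = Ms k j i) \<and>
          (\<forall>th\<in>S. \<phi> th \<in> prob_simplex N) \<and>
          (\<forall>th\<in>S. \<forall>i<p. \<forall>j<p. smom (Q th) i j = (\<Sum>k<N. \<phi> th k * Ms k i j))))"

text \<open>Joint law P of the d random vertices v^(1..d) in R^p (coordinate (k,i) is
  component i of vertex k), i.i.d. over t, independent of the parameter, with
  finite second moments.\<close>
definition vertex_law :: "nat \<Rightarrow> nat \<Rightarrow> ((nat \<times> nat) \<Rightarrow> real) measure \<Rightarrow> bool" where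
  "vertex_law d p P \<longleftrightarrow> prob_space P \<and>
     sets P = sets (PiM ({..<d} \<times> {..<p}) (\<lambda>_. borel :: real measure)) \<and>
     (\<forall>k<d. \<forall>i<p. integrable P (\<lambda>x. (x (k, i))\<^sup>2))"

definition poly_smom :: "nat \<Rightarrow> ((nat \<times> nat) \<Rightarrow> real) measure \<Rightarrow> (nat \<Rightarrow> real) \<Rightarrow> nat \<Rightarrow> nat \<Rightarrow> real" where
  "poly_smom d P th i j =
     (\<integral>x. (\<Sum>k<d. th k * x (k, i)) * (\<Sum>k<d. th k * x (k, j)) \<partial>P)"

end

theory Submission imports Defs begin

definition Gs :: "real \<Rightarrow> (nat \<Rightarrow> real) \<Rightarrow> real" where
  "Gs s x = (\<Prod>l<2. normal_density 0 s (x l))"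

definition Qs :: "real \<Rightarrow> (nat \<Rightarrow> real) measure" where
  "Qs s = density (vec_space 2) (\<lambda>x. ennreal (Gs s x))"

interpretation lb: product_sigma_finite "\<lambda>_::nat. lborel :: real measure"
  by standard

lemma Gs_meas[measurable]: "Gs s \<in> borel_measurable (vec_space 2)"
  unfolding Gs_def vec_space_def by measurable

lemma Gs_nonneg: "0 \<le> Gs s x"
  unfolding Gs_def by (simp add: prod_nonneg)

lemma Qs_prob: assumes "0 < s" shows "prob_space (Qs s)"
proof
  have "emeasure (Qs s) (space (Qs s)) = (\<integral>\<^sup>+ x. ennreal (Gs s x) \<partial>vec_space 2)"
    unfolding Qs_def by (simp add: emeasure_density Gs_meas)
  also have "\<dots> = (\<integral>\<^sup>+ x. (\<Prod>l\<in>{..<2}. ennreal (normal_density 0 s (x l))) \<partial>vec_space 2)"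
    unfolding Gs_def by (simp add: prod_ennreal normal_density_nonneg)
  also have "\<dots> = (\<Prod>l\<in>{..<2::nat}. \<integral>\<^sup>+ t. ennreal (normal_density 0 s t) \<partial>lborel)"
    unfolding vec_space_def by (rule lb.product_nn_integral_prod) auto
  also have "\<dots> = 1"
    using prob_space.emeasure_space_1[OF prob_space_normal_density[OF assms, of 0]]
    by (simp add: emeasure_density)
  finally show "emeasure (Qs s) (space (Qs s)) = 1" .
qed

lemma Qs_prod: "i < 2 \<Longrightarrow> Gs s x * (x i)\<^sup>2 = (\<Prod>l<2. normal_density 0 s (x l) * (if l = i then (x l)\<^sup>2 else 1))"
  unfolding Gs_def by (auto simp: eval_nat_numeral lessThan_Suc less_Suc_eq)

lemma Qs_int: assumes "0 < s" "i < 2" shows "integrable (Qs s) (\<lambda>x. (x i)\<^sup>2)"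
proof -
  have "integrable (vec_space 2) (\<lambda>x. (\<Prod>l<2. normal_density 0 s (x l) * (if l = i then (x l)\<^sup>2 else 1)))"
    unfolding vec_space_def
    apply (rule lb.product_integrable_prod)
    subgoal by simp
    subgoal for l using integrable_normal_moment[where \<mu>=0 and \<sigma>=s and k=2] assms by (cases "l = i") auto
    done
  then have "integrable (vec_space 2) (\<lambda>x. Gs s x *\<^sub>R (x i)\<^sup>2)"
    using Qs_prod[OF assms(2)] by simp
  moreover have "(\<lambda>x. (x i)\<^sup>2) \<in> borel_measurable (Pi\<^sub>M {..<2} (\<lambda>_. lborel :: real measure))"
  proof -
    have m: "(\<lambda>x. x i) \<in> borel_measurable (Pi\<^sub>M {..<2} (\<lambda>_. lborel :: real measure))"
      using measurable_component_singleton[of i "{..<2}" "\<lambda>_. lborel"] assms(2) by simp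
    show ?thesis using borel_measurable_power[OF m, of 2] by simp
  qed
  ultimately show ?thesis unfolding Qs_def
    using Gs_meas[unfolded vec_space_def] by (subst integrable_density) (auto simp: Gs_nonneg vec_space_def)
qed

lemma Qs_mom: assumes "0 < s" shows "smom (Qs s) 0 0 = s\<^sup>2"
proof -
  have "smom (Qs s) 0 0 = (\<integral>x. Gs s x *\<^sub>R (x 0)\<^sup>2 \<partial>vec_space 2)"
    unfolding smom_def Qs_def
    using Gs_meas[unfolded vec_space_def] by (subst integral_density) (auto simp: Gs_nonneg vec_space_def power2_eq_square)
  also have "\<dots> = (\<integral>x. (\<Prod>l<2. normal_density 0 s (x l) * (if l = 0 then (x l)\<^sup>2 else 1)) \<partial>vec_space 2)"
    using Qs_prod[of 0] by simp
  also have "\<dots> = (\<Prod>l<2::nat. \<integral>t. normal_density 0 s t * (if l = 0 then t\<^sup>2 else 1) \<partial>lborel)"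
    unfolding vec_space_def
    apply (rule lb.product_integral_prod)
    subgoal by simp
    subgoal for l using integrable_normal_moment[where \<mu>=0 and \<sigma>=s and k=2] assms by (cases "l = 0") auto
    done
  also have "\<dots> = s\<^sup>2"
    using integral_normal_moment_even[where \<mu>=0 and \<sigma>=s and k=1, OF assms] assms
    by (simp add: eval_nat_numeral lessThan_Suc power2_eq_square)
  finally show ?thesis .
qed


lemma vl_meas:
  assumes "vertex_law d p P" "k < d" "i < p"
  shows "(\<lambda>x. x (k, i)) \<in> borel_measurable P"
proof -
  have "(\<lambda>x. x (k, i)) \<in> measurable (PiM ({..<d} \<times> {..<p}) (\<lambda>_. borel :: real measure)) borel"
    using measurable_component_singleton[of "(k,i)" "{..<d} \<times> {..<p}" "\<lambda>_. borel :: real measure"] assms(2,3)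
    by simp
  moreover have "sets P = sets (PiM ({..<d} \<times> {..<p}) (\<lambda>_. borel :: real measure))"
    using assms(1) unfolding vertex_law_def by simp
  ultimately show ?thesis
    using measurable_cong_sets[of P "PiM ({..<d} \<times> {..<p}) (\<lambda>_. borel :: real measure)" borel borel]
    by simp
qed

lemma abs_prod_le: "\<bar>(a::real) * b\<bar> \<le> a\<^sup>2 + b\<^sup>2"
proof -
  have "0 \<le> (\<bar>a\<bar> - \<bar>b\<bar>) * (\<bar>a\<bar> - \<bar>b\<bar>)" by simp
  then have "2 * (\<bar>a\<bar> * \<bar>b\<bar>) \<le> \<bar>a\<bar> * \<bar>a\<bar> + \<bar>b\<bar> * \<bar>b\<bar>"
    by (simp add: algebra_simps)
  moreover have "0 \<le> \<bar>a\<bar> * \<bar>b\<bar>" by simp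
  moreover have "\<bar>a\<bar> * \<bar>a\<bar> = a * a" "\<bar>b\<bar> * \<bar>b\<bar> = b * b" by (simp_all add: abs_mult_self_eq)
  ultimately show ?thesis unfolding power2_eq_square abs_mult by linarith
qed

lemma vl_int:
  assumes "vertex_law d p P" "k < d" "i < p" "l < d" "j < p"
  shows "integrable P (\<lambda>x. x (k, i) * x (l, j))"
proof (rule Bochner_Integration.integrable_bound)
  show "integrable P (\<lambda>x. (x (k, i))\<^sup>2 + (x (l, j))\<^sup>2)"
    using assms unfolding vertex_law_def by auto
  show "(\<lambda>x. x (k, i) * x (l, j)) \<in> borel_measurable P"
    using vl_meas[OF assms(1,2,3)] vl_meas[OF assms(1,4,5)] by simp
  show "AE x in P. norm (x (k, i) * x (l, j)) \<le> norm ((x (k, i))\<^sup>2 + (x (l, j))\<^sup>2)"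
    using abs_prod_le by simp
qed

lemma poly_expand:
  assumes "vertex_law d p P" "i < p" "j < p"
  shows "poly_smom d P th i j = (\<Sum>k<d. \<Sum>l<d. th k * th l * (\<integral>x. x (k, i) * x (l, j) \<partial>P))"
proof -
  have "poly_smom d P th i j = (\<integral>x. (\<Sum>k<d. \<Sum>l<d. th k * th l * (x (k, i) * x (l, j))) \<partial>P)"
    unfolding poly_smom_def
    by (rule Bochner_Integration.integral_cong) (auto simp: sum_product algebra_simps)
  also have "\<dots> = (\<Sum>k<d. \<Sum>l<d. th k * th l * (\<integral>x. x (k, i) * x (l, j) \<partial>P))"
    using vl_int[OF assms(1) _ assms(2) _ assms(3)]
    apply (subst Bochner_Integration.integral_sum)
     apply (auto intro!: integrable_sum integrable_mult_right sum.cong)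
    done
  finally show ?thesis .
qed

lemma simplex_conv:
  assumes "a \<in> prob_simplex d" "b \<in> prob_simplex d" "0 \<le> t" "t \<le> 1"
  shows "(\<lambda>k. (1 - t) * a k + t * b k) \<in> prob_simplex d"
  using assms unfolding prob_simplex_def
  by (auto simp: sum.distrib sum_distrib_left[symmetric])

theorem proposition2:
  shows "\<exists>n m :: nat. \<exists>S :: (nat \<Rightarrow> real) set. \<exists>Q.
     0 < n \<and> 0 < m \<and> S \<noteq> {} \<and> TI_SMP n m S Q \<and>
     (\<forall>d>0. \<forall>P. vertex_law d (n * (n + m)) P \<longrightarrow>
        \<not> ((\<forall>thb\<in>S. \<exists>th\<in>prob_simplex d. \<forall>i<n * (n + m). \<forall>j<n * (n + m).
                smom (Q thb) i j = poly_smom d P th i j) \<and>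
           (\<forall>th\<in>prob_simplex d. \<exists>thb\<in>S. \<forall>i<n * (n + m). \<forall>j<n * (n + m).
                smom (Q thb) i j = poly_smom d P th i j)))"
proof -
  define th1 :: "nat \<Rightarrow> real" where "th1 = (\<lambda>_. 0)"
  define th2 :: "nat \<Rightarrow> real" where "th2 = (\<lambda>_. 1)"
  have ne: "th2 \<noteq> th1" unfolding th1_def th2_def by (metis zero_neq_one)
  define S where "S = {th1, th2}"
  define Q where "Q = (\<lambda>th. if th = th1 then Qs 1 else Qs 2)"
  have Q1: "Q th1 = Qs 1" and Q2: "Q th2 = Qs 2" using ne by (auto simp: Q_def)
  have p: "1 * (1 + 1) = (2::nat)" by simp
  have SMP: "TI_SMP 1 1 S Q"
    unfolding TI_SMP_def Let_def p
  proof (intro conjI ballI)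
    fix th assume "th \<in> S"
    then obtain s where s: "Q th = Qs s" "(0::real) < s" using Q1 Q2 unfolding S_def by auto
    show "prob_space (Q th)" using s Qs_prob by simp
    show "\<exists>f. f \<in> borel_measurable (vec_space 2) \<and> Q th = density (vec_space 2) f"
    proof (intro exI conjI)
      show "(\<lambda>x. ennreal (Gs s x)) \<in> borel_measurable (vec_space 2)" by measurable
      show "Q th = density (vec_space 2) (\<lambda>x. ennreal (Gs s x))" using s unfolding Qs_def by simp
    qed
    show "\<forall>i<2. integrable (Q th) (\<lambda>x. (x i)\<^sup>2)" using s Qs_int by simp
  next
    define Ms where "Ms = (\<lambda>k::nat. smom (Q (if k = 0 then th1 else th2)))"
    define ph where "ph = (\<lambda>(th::nat\<Rightarrow>real) (k::nat). if k = 0 then (if th = th1 then 1 else 0)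
                           else if k = 1 then (if th = th1 then 0 else 1) else (0::real))"
    show "\<exists>N>0. \<exists>Ms \<phi>. (\<forall>k<N. \<forall>i<2. \<forall>j<2. Ms k i j = Ms k j i) \<and>
        (\<forall>th\<in>S. \<phi> th \<in> prob_simplex N) \<and>
        (\<forall>th\<in>S. \<forall>i<2. \<forall>j<2. smom (Q th) i j = (\<Sum>k<N. \<phi> th k * Ms k i j))"
    proof (intro exI[of _ 2] exI[of _ Ms] exI[of _ ph] conjI)
      show "\<forall>k<2. \<forall>i<2. \<forall>j<2. Ms k i j = Ms k j i"
        unfolding Ms_def smom_def by (simp add: mult.commute)
      show "\<forall>th\<in>S. ph th \<in> prob_simplex 2"
        unfolding prob_simplex_def ph_def by (auto simp: eval_nat_numeral lessThan_Suc)
      show "\<forall>th\<in>S. \<forall>i<2. \<forall>j<2. smom (Q th) i j = (\<Sum>k<2. ph th k * Ms k i j)"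
        unfolding S_def ph_def Ms_def using ne by (auto simp: eval_nat_numeral lessThan_Suc)
    qed simp
  qed
  have M1: "smom (Q th1) 0 0 = 1" using Q1 Qs_mom[of 1] by simp
  have M2: "smom (Q th2) 0 0 = 4" using Q2 Qs_mom[of 2] by simp
  have main: False
    if d: "0 < d" and vl: "vertex_law d 2 P"
      and A: "\<forall>thb\<in>S. \<exists>th\<in>prob_simplex d. \<forall>i<2. \<forall>j<2. smom (Q thb) i j = poly_smom d P th i j"
      and B: "\<forall>th\<in>prob_simplex d. \<exists>thb\<in>S. \<forall>i<2. \<forall>j<2. smom (Q thb) i j = poly_smom d P th i j"
    for d P
  proof -
    obtain a where a: "a \<in> prob_simplex d" "poly_smom d P a 0 0 = 1"
      using A M1 unfolding S_def by fastforce
    obtain b where b: "b \<in> prob_simplex d" "poly_smom d P b 0 0 = 4"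
      using A M2 unfolding S_def by fastforce
    define c where "c = (\<lambda>t k. (1 - t) * a k + t * b k)"
    define g where "g = (\<lambda>t. poly_smom d P (c t) 0 0)"
    have gexp: "g = (\<lambda>t. \<Sum>k<d. \<Sum>l<d. c t k * c t l * (\<integral>x. x (k, 0) * x (l, 0) \<partial>P))"
      unfolding g_def using poly_expand[OF vl, of 0 0] by (simp add: fun_eq_iff)
    have cont: "continuous_on {0..1} g"
      unfolding gexp c_def by (intro continuous_intros)
    have g0: "g 0 = 1" using a unfolding g_def c_def by simp
    have g1: "g 1 = 4" using b unfolding g_def c_def by simp
    obtain t where t: "0 \<le> t" "t \<le> 1" "g t = 5/2"
      using IVT'[of g 0 "5/2" 1] cont g0 g1 by auto
    have "c t \<in> prob_simplex d" unfolding c_def using simplex_conv[OF a(1) b(1) t(1,2)] .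
    then obtain thb where "thb \<in> S" "smom (Q thb) 0 0 = poly_smom d P (c t) 0 0"
      using B by fastforce
    then show False using t(3) M1 M2 unfolding g_def S_def by auto
  qed
  show ?thesis
    apply (rule exI[of _ 1], rule exI[of _ 1], rule exI[of _ S], rule exI[of _ Q])
    using SMP main unfolding p S_def by blast
qed

end
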